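(* Let $m,d\ge1$ be integers, let $\preceq$ be the dominance order on $[m]^d$, and for $x\in[0,m-1]^d$ let $V(x)=\prod_{i=1}^d(x_i+1)$. For $u\preceq w$ set $\hat y_{uw}=1/V(w-u)$, and for $u\preceq v\preceq w$ set $$\hat y'_{uvw}=\hat y_{uw}\frac{V(v-u)}{V(v-u)+V(w-v)},\qquad \hat y''_{uvw}=\hat y_{uw}\frac{V(w-v)}{V(v-u)+V(w-v)}.$$ Then for all $u,v\in[m]^d$ with $u\preceq v$, $$\sum_{w\in[m]^d:\ v\preceq w}\hat y'_{uvw}+\sum_{w\in[m]^d:\ w\preceq u}\hat y''_{wuv}\le (4\pi)^d.$$
   Context: The dominance order: $x\preceq y$ iff $x_i\le y_i$ for all $i\in[d]$. *)

theory Defs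
  imports Complex_Main
begin

text \<open>Points of [m]^d are functions from a finite index type 'd (with CARD('d) = d)
  to nat, with every coordinate in {1..m}.\<close>

definition grid :: "nat \<Rightarrow> ('d::finite \<Rightarrow> nat) set" where
  "grid m = {x. \<forall>i. 1 \<le> x i \<and> x i \<le> m}"

definition dom_le :: "('d::finite \<Rightarrow> nat) \<Rightarrow> ('d \<Rightarrow> nat) \<Rightarrow> bool" where
  "dom_le x y \<longleftrightarrow> (\<forall>i. x i \<le> y i)"

definition V :: "('d::finite \<Rightarrow> nat) \<Rightarrow> real" where
  "V x = (\<Prod>i\<in>UNIV. real (x i) + 1)"

definition vdiff :: "('d::finite \<Rightarrow> nat) \<Rightarrow> ('d \<Rightarrow> nat) \<Rightarrow> ('d \<Rightarrow> nat)" where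
  "vdiff w u = (\<lambda>i. w i - u i)"

definition yhat :: "('d::finite \<Rightarrow> nat) \<Rightarrow> ('d \<Rightarrow> nat) \<Rightarrow> real" where
  "yhat u w = 1 / V (vdiff w u)"

definition yhat1 :: "('d::finite \<Rightarrow> nat) \<Rightarrow> ('d \<Rightarrow> nat) \<Rightarrow> ('d \<Rightarrow> nat) \<Rightarrow> real" where
  "yhat1 u v w = yhat u w * (V (vdiff v u) / (V (vdiff v u) + V (vdiff w v)))"

definition yhat2 :: "('d::finite \<Rightarrow> nat) \<Rightarrow> ('d \<Rightarrow> nat) \<Rightarrow> ('d \<Rightarrow> nat) \<Rightarrow> real" where
  "yhat2 u v w = yhat u w * (V (vdiff w v) / (V (vdiff v u) + V (vdiff w v)))"

end

theory Submission imports Defs "HOL-Library.FuncSet" begin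

definition ff :: "real \<Rightarrow> nat \<Rightarrow> real" where
  "ff x b = sqrt x / ((x + real b) * sqrt (real b + 1))"

definition HH :: "real \<Rightarrow> nat \<Rightarrow> real" where
  "HH x n = 8 * sqrt (real n) / (sqrt (real n) + sqrt x)"

lemma ff_nonneg: "x \<ge> 1 \<Longrightarrow> ff x b \<ge> 0"
  unfolding ff_def by simp

lemma ff_step:
  assumes x: "x \<ge> 1"
  shows "ff x n \<le> HH x (Suc n) - HH x n"
proof -
  define s where "s = sqrt (real n + 1)"
  define r where "r = sqrt (real n)"
  define t where "t = sqrt x"
  have s2: "s^2 = real n + 1" unfolding s_def by simp
  have r2: "r^2 = real n" unfolding r_def by simp
  have t2: "t^2 = x" unfolding t_def using x by simp
  have sp: "s > 0" unfolding s_def by simp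
  have r0: "r \<ge> 0" unfolding r_def by simp
  have t1: "t \<ge> 1" unfolding t_def using x by simp
  have rs: "r \<le> s" unfolding r_def s_def by simp
  have sr: "s - r = 1 / (s + r)"
  proof -
    have "(s - r) * (s + r) = 1" using s2 r2 by (simp add: algebra_simps power2_eq_square)
    moreover have "s + r > 0" using sp r0 by simp
    ultimately show ?thesis by (simp add: field_simps)
  qed
  have lhs: "ff x n = t / ((t^2 + s^2 - 1) * s)"
    unfolding ff_def using s2 t2 by (simp add: s_def t_def)
  have rhs: "HH x (Suc n) - HH x n = 8 * t * (s - r) / ((s + t) * (r + t))"
  proof -
    have "HH x (Suc n) - HH x n = 8 * s / (s + t) - 8 * r / (r + t)"
      unfolding HH_def s_def r_def t_def by (simp add: add.commute)
    also have "\<dots> = 8 * t * (s - r) / ((s + t) * (r + t))"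
      using sp r0 t1 by (simp add: field_simps)
    finally show ?thesis .
  qed
  have "8 * t * (s - r) / ((s + t) * (r + t)) = 8 * t / ((s + r) * (s + t) * (r + t))"
    unfolding sr using sp r0 t1 by (simp add: field_simps)
  also have "\<dots> \<ge> 8 * t / (2 * s * (s + t) * (s + t))"
  proof -
    have le: "(s + r) * (s + t) * (r + t) \<le> 2 * s * (s + t) * (s + t)"
      using rs r0 sp t1 by (intro mult_mono) auto
    have p1: "(s + r) * (s + t) * (r + t) > 0" using rs r0 sp t1 by simp
    have p2: "2 * s * (s + t) * (s + t) > 0" using rs r0 sp t1 by simp
    show ?thesis using le p1 p2 t1 by (intro divide_left_mono) auto
  qed
  moreover have "t / ((t^2 + s^2 - 1) * s) \<le> 8 * t / (2 * s * (s + t) * (s + t))"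
  proof -
    have a: "(s + t) * (s + t) \<le> 4 * (t^2 + s^2 - 1)"
    proof -
      have "(s+t)*(s+t) \<le> 2*(s^2+t^2)" 
      proof -
        have "0 \<le> (s - t) * (s - t)" by simp
        then show ?thesis by (simp add: power2_eq_square algebra_simps)
      qed
      moreover have "s^2 + t^2 \<ge> 2" using s2 t2 x by simp
      ultimately show ?thesis by simp
    qed
    have pos: "t^2 + s^2 - 1 > 0" using s2 t2 x by simp
    have "8 * t / (2 * s * (s + t) * (s + t)) = t / (s * ((s + t) * (s + t) / 4))"
    proof -
      have g: "\<And>Y::real. 8*t/(2*s*Y) = t/(s*(Y/4))" by (simp add: mult.commute)
      show ?thesis using g[of "(s + t) * (s + t)"] by (simp add: mult.assoc)
    qed
    also have "\<dots> \<ge> t / (s * (t^2 + s^2 - 1))"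
      using a pos sp t1 by (intro divide_left_mono mult_left_mono mult_pos_pos) auto
    finally show ?thesis by (simp add: mult.commute)
  qed
  ultimately show ?thesis using lhs rhs by linarith
qed

lemma HH_le: "x \<ge> 1 \<Longrightarrow> HH x n \<le> 8"
proof -
  assume x: "x \<ge> 1"
  have "sqrt (real n) + sqrt x > 0" using x by (simp add: add_nonneg_pos)
  then show ?thesis unfolding HH_def using x by (simp add: divide_le_eq)
qed

lemma ff_sum_lessThan: "x \<ge> 1 \<Longrightarrow> (\<Sum>b<n. ff x b) \<le> HH x n"
proof (induction n)
  case 0 then show ?case by (simp add: HH_def)
next
  case (Suc n) then show ?case using ff_step[of x n] by simp
qed

lemma ff_sum_finite:
  assumes "x \<ge> 1" "finite B"
  shows "(\<Sum>b\<in>B. ff x b) \<le> 8"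
proof -
  obtain n where "B \<subseteq> {..<n}" using assms(2) finite_nat_set_iff_bounded by auto
  then have "(\<Sum>b\<in>B. ff x b) \<le> (\<Sum>b<n. ff x b)"
    using ff_nonneg[OF assms(1)] by (intro sum_mono2) auto
  also have "\<dots> \<le> 8" using ff_sum_lessThan[OF assms(1)] HH_le[OF assms(1)] order.trans by blast
  finally show ?thesis .
qed


lemma sqrt_prod: "finite A \<Longrightarrow> sqrt (prod f A) = (\<Prod>i\<in>A. sqrt (f i))"
  by (induction A rule: finite_induct) (auto simp: real_sqrt_mult)

lemma amgm_frac:
  fixes A B :: real assumes "A > 0" "B > 0"
  shows "A / (A + B) \<le> sqrt A / (2 * sqrt B)"
proof -
  have "0 \<le> (sqrt A - sqrt B)^2" by simp
  then have "2 * sqrt A * sqrt B \<le> A + B"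
    using assms by (simp add: power2_eq_square algebra_simps)
  moreover have "sqrt A * sqrt B > 0" using assms by simp
  ultimately have "A / (A + B) \<le> A / (2 * sqrt A * sqrt B)"
    using assms by (intro divide_left_mono) auto
  also have "\<dots> = sqrt A / (2 * sqrt B)"
  proof -
    have "A = sqrt A * sqrt A" using assms by simp
    then show ?thesis using assms by (metis (no_types) mult.commute mult.left_commute
      nonzero_mult_divide_mult_cancel_left real_sqrt_gt_0_iff order_less_irrefl)
  qed
  finally show ?thesis .
qed

lemma key_bound:
  fixes \<alpha> \<beta> \<gamma> :: "'d::finite \<Rightarrow> real"
  assumes "\<And>i. \<alpha> i > 0" "\<And>i. \<beta> i > 0" "\<And>i. \<gamma> i > 0"
  shows "(1 / prod \<gamma> UNIV) * (prod \<alpha> UNIV / (prod \<alpha> UNIV + prod \<beta> UNIV))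
     \<le> 1/2 * (\<Prod>i\<in>UNIV. sqrt (\<alpha> i) / (\<gamma> i * sqrt (\<beta> i)))"
proof -
  have pa: "prod \<alpha> UNIV > 0" "prod \<beta> UNIV > 0" "prod \<gamma> UNIV > 0"
    using assms by (auto intro: prod_pos)
  have "(1 / prod \<gamma> UNIV) * (prod \<alpha> UNIV / (prod \<alpha> UNIV + prod \<beta> UNIV))
      \<le> (1 / prod \<gamma> UNIV) * (sqrt (prod \<alpha> UNIV) / (2 * sqrt (prod \<beta> UNIV)))"
    using pa by (intro mult_left_mono amgm_frac) auto
  also have "\<dots> = 1/2 * (sqrt (prod \<alpha> UNIV) / (prod \<gamma> UNIV * sqrt (prod \<beta> UNIV)))"
    by simp
  also have "sqrt (prod \<alpha> UNIV) / (prod \<gamma> UNIV * sqrt (prod \<beta> UNIV))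
      = (\<Prod>i\<in>UNIV. sqrt (\<alpha> i) / (\<gamma> i * sqrt (\<beta> i)))"
    by (simp add: sqrt_prod prod_dividef prod.distrib)
  finally show ?thesis .
qed

lemma term1_bound:
  fixes u v w :: "'d::finite \<Rightarrow> nat"
  assumes "dom_le u v" "dom_le v w"
  shows "yhat1 u v w \<le> 1/2 * (\<Prod>i\<in>UNIV. ff (real (v i - u i) + 1) (w i - v i))"
proof -
  have eq: "yhat1 u v w = (1 / (\<Prod>i\<in>UNIV. real (w i - u i) + 1)) *
     ((\<Prod>i\<in>UNIV. real (v i - u i) + 1) / ((\<Prod>i\<in>UNIV. real (v i - u i) + 1) + (\<Prod>i\<in>UNIV. real (w i - v i) + 1)))"
    unfolding yhat1_def yhat_def V_def vdiff_def by simp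
  have "(\<Prod>i\<in>UNIV. ff (real (v i - u i) + 1) (w i - v i)) =
      (\<Prod>i\<in>UNIV. sqrt (real (v i - u i) + 1) / ((real (w i - u i) + 1) * sqrt (real (w i - v i) + 1)))"
  proof (rule prod.cong[OF refl])
    fix i
    have "u i \<le> v i" "v i \<le> w i" using assms unfolding dom_le_def by auto
    then have "real (v i - u i) + 1 + real (w i - v i) = real (w i - u i) + 1" by (simp add: of_nat_diff)
    then show "ff (real (v i - u i) + 1) (w i - v i) = sqrt (real (v i - u i) + 1) / ((real (w i - u i) + 1) * sqrt (real (w i - v i) + 1))"
      unfolding ff_def by simp
  qed
  then show ?thesis unfolding eq
    by (simp only:) (rule key_bound, auto simp: add_pos_nonneg)
qed

lemma term2_bound:
  fixes u v w :: "'d::finite \<Rightarrow> nat"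
  assumes "dom_le u v" "dom_le w u"
  shows "yhat2 w u v \<le> 1/2 * (\<Prod>i\<in>UNIV. ff (real (v i - u i) + 1) (u i - w i))"
proof -
  have eq: "yhat2 w u v = (1 / (\<Prod>i\<in>UNIV. real (v i - w i) + 1)) *
     ((\<Prod>i\<in>UNIV. real (v i - u i) + 1) / ((\<Prod>i\<in>UNIV. real (v i - u i) + 1) + (\<Prod>i\<in>UNIV. real (u i - w i) + 1)))"
    unfolding yhat2_def yhat_def V_def vdiff_def by (simp add: add.commute)
  have "(\<Prod>i\<in>UNIV. ff (real (v i - u i) + 1) (u i - w i)) =
      (\<Prod>i\<in>UNIV. sqrt (real (v i - u i) + 1) / ((real (v i - w i) + 1) * sqrt (real (u i - w i) + 1)))"
  proof (rule prod.cong[OF refl])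
    fix i
    have "u i \<le> v i" "w i \<le> u i" using assms unfolding dom_le_def by auto
    then have "real (v i - u i) + 1 + real (u i - w i) = real (v i - w i) + 1" by (simp add: of_nat_diff)
    then show "ff (real (v i - u i) + 1) (u i - w i) = sqrt (real (v i - u i) + 1) / ((real (v i - w i) + 1) * sqrt (real (u i - w i) + 1))"
      unfolding ff_def by simp
  qed
  then show ?thesis unfolding eq
    by (simp only:) (rule key_bound, auto simp: add_pos_nonneg)
qed


theorem lemma3:
  fixes m :: nat and u v :: "'d::finite \<Rightarrow> nat"
  assumes "m \<ge> 1"
    and "u \<in> grid m" and "v \<in> grid m" and "dom_le u v"
  shows "(\<Sum>w\<in>{w \<in> grid m. dom_le v w}. yhat1 u v w)
         + (\<Sum>w\<in>{w \<in> grid m. dom_le w u}. yhat2 w u v)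
         \<le> (4 * pi) ^ card (UNIV :: 'd set)"
proof -
  define x where "x i = real (v i - u i) + 1" for i
  have x1: "x i \<ge> 1" for i unfolding x_def by simp
  have S1: "{w \<in> grid m. dom_le v w} = PiE UNIV (\<lambda>i. {v i..m})"
    using assms(3) unfolding grid_def dom_le_def PiE_UNIV_domain
    by (auto simp: Pi_iff) (meson le_trans)
  have S2: "{w \<in> grid m. dom_le w u} = PiE UNIV (\<lambda>i. {1..u i})"
    using assms(2) unfolding grid_def dom_le_def PiE_UNIV_domain
    by (auto simp: Pi_iff) (meson le_trans)
  have A: "(\<Sum>w\<in>{w \<in> grid m. dom_le v w}. yhat1 u v w) \<le> 8 ^ card (UNIV :: 'd set) / 2"
  proof -
    have "(\<Sum>w\<in>{w \<in> grid m. dom_le v w}. yhat1 u v w)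
        \<le> (\<Sum>w\<in>PiE UNIV (\<lambda>i. {v i..m}). 1/2 * (\<Prod>i\<in>UNIV. ff (x i) (w i - v i)))"
      unfolding S1[symmetric] x_def
      by (rule sum_mono, rule term1_bound) (use assms(4) in auto)
    also have "\<dots> = 1/2 * (\<Prod>i\<in>UNIV. \<Sum>k\<in>{v i..m}. ff (x i) (k - v i))"
      by (simp add: prod_sum_PiE sum_distrib_left)
    also have "\<dots> \<le> 1/2 * (\<Prod>i\<in>(UNIV::'d set). 8)"
    proof (intro mult_left_mono prod_mono conjI)
      fix i :: 'd
      show "0 \<le> (\<Sum>k\<in>{v i..m}. ff (x i) (k - v i))"
        using ff_nonneg[OF x1] by (intro sum_nonneg) auto
      have "(\<Sum>k\<in>{v i..m}. ff (x i) (k - v i)) = sum (ff (x i)) ((\<lambda>k. k - v i) ` {v i..m})"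
        by (subst sum.reindex) (auto simp: inj_on_def)
      also have "\<dots> \<le> 8" by (rule ff_sum_finite[OF x1]) auto
      finally show "(\<Sum>k\<in>{v i..m}. ff (x i) (k - v i)) \<le> 8" .
    qed simp
    finally show ?thesis by simp
  qed
  have B: "(\<Sum>w\<in>{w \<in> grid m. dom_le w u}. yhat2 w u v) \<le> 8 ^ card (UNIV :: 'd set) / 2"
  proof -
    have "(\<Sum>w\<in>{w \<in> grid m. dom_le w u}. yhat2 w u v)
        \<le> (\<Sum>w\<in>PiE UNIV (\<lambda>i. {1..u i}). 1/2 * (\<Prod>i\<in>UNIV. ff (x i) (u i - w i)))"
      unfolding S2[symmetric] x_def
      by (rule sum_mono, rule term2_bound) (use assms(4) in auto)
    also have "\<dots> = 1/2 * (\<Prod>i\<in>UNIV. \<Sum>k\<in>{1..u i}. ff (x i) (u i - k))"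
      by (simp add: prod_sum_PiE sum_distrib_left)
    also have "\<dots> \<le> 1/2 * (\<Prod>i\<in>(UNIV::'d set). 8)"
    proof (intro mult_left_mono prod_mono conjI)
      fix i :: 'd
      show "0 \<le> (\<Sum>k\<in>{1..u i}. ff (x i) (u i - k))"
        using ff_nonneg[OF x1] by (intro sum_nonneg) auto
      have "(\<Sum>k\<in>{1..u i}. ff (x i) (u i - k)) = sum (ff (x i)) ((\<lambda>k. u i - k) ` {1..u i})"
        by (subst sum.reindex) (auto simp: inj_on_def)
      also have "\<dots> \<le> 8" by (rule ff_sum_finite[OF x1]) auto
      finally show "(\<Sum>k\<in>{1..u i}. ff (x i) (u i - k)) \<le> 8" .
    qed simp
    finally show ?thesis by simp
  qed
  have "(8::real) ^ card (UNIV :: 'd set) \<le> (4 * pi) ^ card (UNIV :: 'd set)"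
    using pi_ge_two by (intro power_mono) auto
  then show ?thesis using A B by linarith
qed

end
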